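(* Let $\mathcal{A}$ be a finite set of at least 3 alternatives, $N\ge2$, $i\in\{1,\dots,N\}$, and $w:\underline{\mathcal{P}}^N\to\underline{\mathcal{P}}$ satisfy Unanimity, IIA and Non-Dictatorship. Then the self-reference system $(w,\Omega_i)$ with valid elements $\mathcal{P}^N$ is quasi-Gödelian with respect to $\Upsilon_i=(\mathbf{c},\dots,\mathbf{i},\dots,\mathbf{c})$: there exists $q\in\mathcal{P}^N$ with $q\le\neg(\Upsilon_i\ast q)$ such that $(\Upsilon_i,q)$ does not satisfy both quasi-consistency $q\le\neg(\Upsilon_i\ast\neg q)$ and quasi-completeness ($\neg(\Upsilon_i\ast q)$ and $\neg(\Upsilon_i\ast\neg q)$ are inconsistent).
   Context: $\mathcal{P}$: weak orders on $\mathcal{A}$; $\underline{\mathcal{P}}=\mathcal{P}\cup\{\mathbf{c}\}$, $\mathbf{c}$ a new element (contradictory preference cycle). Strictness order: $r\le s$ iff every strict preference of $s$ is one of $r$; $\mathbf{c}$ bottom, $\mathbf{i}$ (total indifference) top; $\wedge,\vee$ meet and join; negation $\neg\mathbf{c}=\mathbf{i}$, $\neg\mathbf{i}=\mathbf{c}$, and otherwise $\neg r$ reverses all strict preferences of $r$. On $\underline{\mathcal{P}}^N$ all operations and the order are coordinatewise; $\mathcal{P}^N$ are the valid profiles, and $p,q$ are inconsistent if $p_j\wedge q_j=\mathbf{c}$ for some $j$. $\Omega_i((p_1,\dots,p_N),r)=(\mathbf{c},\dots,p_i\wedge r,\dots,\mathbf{c})$ (position $i$), and $e\ast f:=\Omega_i(e,w(f))$;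 $\neg\Upsilon\ast d$ means $\neg(\Upsilon\ast d)$. Unanimity: if all individuals of $p\in\mathcal{P}^N$ strictly prefer $a$ to $b$, so does $w(p)$. IIA: the aggregate comparison of $a,b$ depends only on individuals' comparisons of $a,b$ (for these axioms $\mathbf{c}$ is read as a preference cycle, i.e. an intransitive assignment of pairwise comparisons). Dictator at $j$: for all $p\in\mathcal{P}^N$, $w(p)=\mathbf{c}\Rightarrow p_j=\mathbf{i}$ and $p_j\ne\mathbf{i}\Rightarrow w(p)\le p_j$. Non-Dictatorship: no dictator. *)

theory Defs
  imports Main
begin

text \<open>A weak order on the alternatives 'a: a total (complete) and transitive
relation; R a b means "a is weakly preferred to b".\<close>

definition weak_order :: "('a \<Rightarrow> 'a \<Rightarrow> bool) \<Rightarrow> bool" where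
  "weak_order R \<longleftrightarrow> (\<forall>a b. R a b \<or> R b a) \<and> (\<forall>a b c. R a b \<longrightarrow> R b c \<longrightarrow> R a c)"

typedef 'a worder = "{R :: 'a \<Rightarrow> 'a \<Rightarrow> bool. weak_order R}"
  by (rule exI[of _ "\<lambda>_ _. True"]) (simp add: weak_order_def)

text \<open>The extended set: Cyc is the contradictory element c, WO r a weak order.\<close>
datatype 'a pref = Cyc | WO "'a worder"

text \<open>Strict preferences; c is treated as containing every strict preference,
which makes it the bottom of the strictness order.\<close>
fun strict :: "'a pref \<Rightarrow> 'a \<Rightarrow> 'a \<Rightarrow> bool" where
  "strict Cyc a b = True"
| "strict (WO r) a b = (Rep_worder r a b \<and> \<not> Rep_worder r b a)"

definition ple :: "'a pref \<Rightarrow> 'a pref \<Rightarrow> bool" where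
  "ple r s \<longleftrightarrow> (\<forall>a b. strict s a b \<longrightarrow> strict r a b)"

definition Ind :: "'a pref" where
  "Ind = WO (Abs_worder (\<lambda>_ _. True))"

definition pmeet :: "'a pref \<Rightarrow> 'a pref \<Rightarrow> 'a pref" where
  "pmeet r s = (THE x. ple x r \<and> ple x s \<and> (\<forall>y. ple y r \<and> ple y s \<longrightarrow> ple y x))"

definition pneg :: "'a pref \<Rightarrow> 'a pref" where
  "pneg r = (if r = Cyc then Ind
             else if r = Ind then Cyc
             else (case r of WO R \<Rightarrow> WO (Abs_worder (\<lambda>a b. Rep_worder R b a)) | Cyc \<Rightarrow> Cyc))"

type_synonym ('n, 'a) profile = "'n \<Rightarrow> 'a pref"

definition valid :: "('n, 'a) profile \<Rightarrow> bool" where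
  "valid p \<longleftrightarrow> (\<forall>j. p j \<noteq> Cyc)"

definition prof_le :: "('n, 'a) profile \<Rightarrow> ('n, 'a) profile \<Rightarrow> bool" where
  "prof_le p q \<longleftrightarrow> (\<forall>j. ple (p j) (q j))"

definition prof_neg :: "('n, 'a) profile \<Rightarrow> ('n, 'a) profile" where
  "prof_neg p = (\<lambda>j. pneg (p j))"

definition inconsistent :: "('n, 'a) profile \<Rightarrow> ('n, 'a) profile \<Rightarrow> bool" where
  "inconsistent p q \<longleftrightarrow> (\<exists>j. pmeet (p j) (q j) = Cyc)"

definition Omega :: "'n \<Rightarrow> ('n, 'a) profile \<Rightarrow> 'a pref \<Rightarrow> ('n, 'a) profile" where
  "Omega i e r = (\<lambda>j. if j = i then pmeet (e i) r else Cyc)"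

definition star :: "(('n, 'a) profile \<Rightarrow> 'a pref) \<Rightarrow> 'n \<Rightarrow> ('n, 'a) profile \<Rightarrow> ('n, 'a) profile
                    \<Rightarrow> ('n, 'a) profile" where
  "star w i e f = Omega i e (w f)"

definition Upsilon :: "'n \<Rightarrow> ('n, 'a) profile" where
  "Upsilon i = (\<lambda>j. if j = i then Ind else Cyc)"

text \<open>For Unanimity and IIA, c is read as a preference cycle: w is induced by an
aggregation F of complete pairwise comparisons, and w p = c exactly when F p is
intransitive (otherwise w p is the weak order F p).\<close>

definition induced_by :: "(('n, 'a) profile \<Rightarrow> 'a pref) \<Rightarrow> (('n, 'a) profile \<Rightarrow> 'a \<Rightarrow> 'a \<Rightarrow> bool) \<Rightarrow> bool" where
  "induced_by w F \<longleftrightarrow> (\<forall>p. valid p \<longrightarrow>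
      (\<forall>a b. F p a b \<or> F p b a) \<and>
      (if (\<forall>a b c. F p a b \<longrightarrow> F p b c \<longrightarrow> F p a c)
       then w p = WO (Abs_worder (F p)) else w p = Cyc))"

definition unanimity_rel :: "(('n, 'a) profile \<Rightarrow> 'a \<Rightarrow> 'a \<Rightarrow> bool) \<Rightarrow> bool" where
  "unanimity_rel F \<longleftrightarrow> (\<forall>p a b. valid p \<longrightarrow> (\<forall>j. strict (p j) a b) \<longrightarrow> F p a b \<and> \<not> F p b a)"

text \<open>Individual weak comparison (only used on valid profiles).\<close>
fun wpref :: "'a pref \<Rightarrow> 'a \<Rightarrow> 'a \<Rightarrow> bool" where
  "wpref Cyc a b = False"
| "wpref (WO r) a b = Rep_worder r a b"

definition iia_rel :: "(('n, 'a) profile \<Rightarrow> 'a \<Rightarrow> 'a \<Rightarrow> bool) \<Rightarrow> bool" where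
  "iia_rel F \<longleftrightarrow> (\<forall>p q a b. valid p \<longrightarrow> valid q \<longrightarrow>
      (\<forall>j. wpref (p j) a b = wpref (q j) a b \<and> wpref (p j) b a = wpref (q j) b a) \<longrightarrow>
      F p a b = F q a b \<and> F p b a = F q b a)"

definition unanimity_iia :: "(('n, 'a) profile \<Rightarrow> 'a pref) \<Rightarrow> bool" where
  "unanimity_iia w \<longleftrightarrow> (\<exists>F. induced_by w F \<and> unanimity_rel F \<and> iia_rel F)"

definition dictator :: "(('n, 'a) profile \<Rightarrow> 'a pref) \<Rightarrow> 'n \<Rightarrow> bool" where
  "dictator w j \<longleftrightarrow> (\<forall>p. valid p \<longrightarrow>
      (w p = Cyc \<longrightarrow> p j = Ind) \<and> (p j \<noteq> Ind \<longrightarrow> ple (w p) (p j)))"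

definition non_dictatorship :: "(('n, 'a) profile \<Rightarrow> 'a pref) \<Rightarrow> bool" where
  "non_dictatorship w \<longleftrightarrow> \<not> (\<exists>j. dictator w j)"

definition quasi_consistent :: "(('n, 'a) profile \<Rightarrow> 'a pref) \<Rightarrow> 'n \<Rightarrow> ('n, 'a) profile \<Rightarrow> ('n, 'a) profile \<Rightarrow> bool" where
  "quasi_consistent w i U q \<longleftrightarrow> prof_le q (prof_neg (star w i U (prof_neg q)))"

definition quasi_complete :: "(('n, 'a) profile \<Rightarrow> 'a pref) \<Rightarrow> 'n \<Rightarrow> ('n, 'a) profile \<Rightarrow> ('n, 'a) profile \<Rightarrow> bool" where
  "quasi_complete w i U q \<longleftrightarrow>
     inconsistent (prof_neg (star w i U q)) (prof_neg (star w i U (prof_neg q)))"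

definition quasi_goedelian :: "(('n, 'a) profile \<Rightarrow> 'a pref) \<Rightarrow> 'n \<Rightarrow> ('n, 'a) profile \<Rightarrow> bool" where
  "quasi_goedelian w i U \<longleftrightarrow> (\<exists>q. valid q \<and> prof_le q (prof_neg (star w i U q)) \<and>
      \<not> (quasi_consistent w i U q \<and> quasi_complete w i U q))"

end

theory Submission
  imports Defs
begin

definition mk :: "('a \<Rightarrow> nat) \<Rightarrow> 'a pref" where
  "mk f = WO (Abs_worder (\<lambda>a b. f b \<le> f a))"

lemma mk_Rep: "Rep_worder (Abs_worder (\<lambda>a b. f b \<le> f a)) = (\<lambda>a b. (f b::nat) \<le> f a)"
  by (rule Abs_worder_inverse) (auto simp: weak_order_def)

lemma strict_mk[simp]: "strict (mk f) a b \<longleftrightarrow> f b < f a"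
  by (auto simp: mk_def mk_Rep)

lemma wpref_mk[simp]: "wpref (mk f) a b \<longleftrightarrow> f b \<le> f a"
  by (simp add: mk_def mk_Rep)

lemma valid_mk[simp]: "valid (\<lambda>j. mk (g j))"
  by (simp add: valid_def mk_def)

lemma Rep_wo: "weak_order (Rep_worder r)"
  using Rep_worder[of r] by simp

lemma valid_WO: "valid p \<Longrightarrow> \<exists>r. p j = WO r"
  by (cases "p j") (auto simp: valid_def)

lemma strict_wpref:
  assumes "valid p" "valid q" "strict (p j) x y" "strict (q j) x y"
  shows "wpref (p j) x y = wpref (q j) x y \<and> wpref (p j) y x = wpref (q j) y x"
  using valid_WO[OF assms(1), of j] valid_WO[OF assms(2), of j] assms(3,4) by auto

lemma strict_irrefl: "valid p \<Longrightarrow> \<not> strict (p j) a a"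
  using valid_WO[of p j] by auto

definition prof2 :: "('n,'a) profile \<Rightarrow> 'a \<Rightarrow> 'a \<Rightarrow> ('n \<Rightarrow> 'a \<Rightarrow> nat) \<Rightarrow> ('n,'a) profile" where
  "prof2 p x y g = (\<lambda>j. mk (\<lambda>z. if z = x then (if wpref (p j) x y then 4 else 2)
      else if z = y then (if wpref (p j) y x then 4 else 2) else g j z))"

lemma prof2_valid: "valid (prof2 p x y g)"
  by (simp add: prof2_def)

lemma prof2_iia:
  assumes "valid p" "x \<noteq> y"
  shows "wpref (p j) x y = wpref (prof2 p x y g j) x y \<and> wpref (p j) y x = wpref (prof2 p x y g j) y x"
proof -
  obtain r where r: "p j = WO r" using valid_WO[OF assms(1)] by blast
  have "Rep_worder r x y \<or> Rep_worder r y x" using Rep_wo[of r] by (auto simp: weak_order_def)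
  then show ?thesis using assms(2) r by (auto simp: prof2_def)
qed

locale arrow =
  fixes F :: "('n::finite, 'a::finite) profile \<Rightarrow> 'a \<Rightarrow> 'a \<Rightarrow> bool"
  assumes three: "card (UNIV :: 'a set) \<ge> 3"
  and compl: "valid p \<Longrightarrow> F p a b \<or> F p b a"
  and trans: "valid p \<Longrightarrow> F p a b \<Longrightarrow> F p b c \<Longrightarrow> F p a c"
  and unan: "unanimity_rel F"
  and iia: "iia_rel F"
begin

definition D where
  "D S a b \<longleftrightarrow> (\<forall>p. valid p \<longrightarrow> (\<forall>j\<in>S. strict (p j) a b) \<longrightarrow> F p a b \<and> \<not> F p b a)"
definition W where
  "W S a b \<longleftrightarrow> (\<forall>p. valid p \<longrightarrow> (\<forall>j\<in>S. strict (p j) a b) \<longrightarrow> (\<forall>j. j \<notin> S \<longrightarrow> strict (p j) b a)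
     \<longrightarrow> F p a b \<and> \<not> F p b a)"

lemma D_W: "D S a b \<Longrightarrow> W S a b" by (auto simp: D_def W_def)

lemma unanD: "valid p \<Longrightarrow> (\<forall>j. strict (p j) a b) \<Longrightarrow> F p a b \<and> \<not> F p b a"
  using unan by (auto simp: unanimity_rel_def)

lemma iiaD: "valid p \<Longrightarrow> valid q \<Longrightarrow>
   (\<forall>j. wpref (p j) a b = wpref (q j) a b \<and> wpref (p j) b a = wpref (q j) b a) \<Longrightarrow>
   F p a b = F q a b \<and> F p b a = F q b a"
  using iia unfolding iia_rel_def by blast

lemma third: "\<exists>c::'a. c \<noteq> x \<and> c \<noteq> y"
proof (rule ccontr)
  assume "\<not> ?thesis"
  then have "UNIV \<subseteq> {x,y}" by auto
  then have "card (UNIV::'a set) \<le> card {x,y}" by (intro card_mono) auto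
  also have "\<dots> \<le> 2" by (cases "x = y") auto
  finally show False using three by simp
qed

lemma F_prof2: "valid p \<Longrightarrow> x \<noteq> y \<Longrightarrow>
   F (prof2 p x y g) x y = F p x y \<and> F (prof2 p x y g) y x = F p y x"
  using iiaD[of p "prof2 p x y g" x y] prof2_iia[of p x y] prof2_valid by metis

lemma exp1:
  assumes W: "W S a b" and ne: "a \<noteq> b" "c \<noteq> a" "c \<noteq> b"
  shows "D S a c"
  unfolding D_def
proof (intro allI impI)
  fix p assume p: "valid p" "\<forall>j\<in>S. strict (p j) a c"
  define q where "q = prof2 p a c (\<lambda>j z. if j \<in> S then 3 else 5)"
  have vq: "valid q" by (simp add: q_def prof2_valid)
  have sS: "wpref (p j) a c \<and> \<not> wpref (p j) c a" if "j \<in> S" for j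
    using p that valid_WO[of p j] by auto
  have "\<forall>j\<in>S. strict (q j) a b" using sS ne by (auto simp: q_def prof2_def)
  moreover have "\<forall>j. j\<notin>S \<longrightarrow> strict (q j) b a" using ne by (auto simp: q_def prof2_def)
  ultimately have ab: "F q a b \<and> \<not> F q b a" using W vq unfolding W_def by blast
  have "\<forall>j. strict (q j) b c" using sS ne by (auto simp: q_def prof2_def)
  then have bc: "F q b c \<and> \<not> F q c b" using unanD vq by blast
  have "F q a c \<and> \<not> F q c a" using ab bc trans[OF vq] by blast
  then show "F p a c \<and> \<not> F p c a" using F_prof2[OF p(1), of a c] ne unfolding q_def by metis
qed

lemma exp2:
  assumes W: "W S a b" and ne: "a \<noteq> b" "c \<noteq> a" "c \<noteq> b"
  shows "D S c b"
  unfolding D_def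
proof (intro allI impI)
  fix p assume p: "valid p" "\<forall>j\<in>S. strict (p j) c b"
  define q where "q = prof2 p c b (\<lambda>j z. if j \<in> S then 3 else 0)"
  have vq: "valid q" by (simp add: q_def prof2_valid)
  have sS: "wpref (p j) c b \<and> \<not> wpref (p j) b c" if "j \<in> S" for j
    using p that valid_WO[of p j] by auto
  have "\<forall>j\<in>S. strict (q j) a b" using sS ne by (auto simp: q_def prof2_def)
  moreover have "\<forall>j. j\<notin>S \<longrightarrow> strict (q j) b a" using ne by (auto simp: q_def prof2_def)
  ultimately have ab: "F q a b \<and> \<not> F q b a" using W vq unfolding W_def by blast
  have "\<forall>j. strict (q j) c a" using sS ne by (auto simp: q_def prof2_def)
  then have ca: "F q c a \<and> \<not> F q a c" using unanD vq by blast
  have "F q c b \<and> \<not> F q b c" using ab ca trans[OF vq] by blast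
  then show "F p c b \<and> \<not> F p b c" using F_prof2[OF p(1), of c b] ne unfolding q_def by metis
qed

definition Dall where "Dall S \<longleftrightarrow> (\<forall>x y. x \<noteq> y \<longrightarrow> D S x y)"

lemma W_Dall:
  assumes W: "W S a b" and ab: "a \<noteq> b"
  shows "Dall S"
proof -
  have i: "D S a c" if "c \<noteq> a" for c
  proof (cases "c = b")
    case True
    obtain d where d: "d \<noteq> a" "d \<noteq> b" using third by blast
    have "D S a d" using exp1[OF W ab] d by auto
    then show ?thesis using exp1[OF D_W, of S a d b] d ab True by auto
  next
    case False
    then show ?thesis using exp1[OF W ab] that by auto
  qed
  show ?thesis unfolding Dall_def
  proof (intro allI impI)
    fix x y :: 'a assume xy: "x \<noteq> y"
    show "D S x y"
    proof (cases "y = a")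
      case False
      show ?thesis
      proof (cases "x = a")
        case True then show ?thesis using i False by auto
      next
        case xa: False
        show ?thesis using exp2[OF D_W[OF i[of y]], of x] False xa xy by auto
      qed
    next
      case True
      obtain c where c: "c \<noteq> x" "c \<noteq> a" using third by blast
      have "D S x c" using exp2[OF D_W[OF i[of c]], of x] c xy True by auto
      then show ?thesis using exp1[OF D_W, of S x c a] c xy True by auto
    qed
  qed
qed

lemma contraction:
  assumes S: "Dall S" and d: "d \<in> S"
  shows "Dall {d} \<or> Dall (S - {d})"
proof -
  obtain a :: 'a where True by blast
  obtain b where b: "b \<noteq> a" using third by blast
  obtain c where c: "c \<noteq> a" "c \<noteq> b" using third by blast
  define p0 :: "('n,'a) profile" where "p0 = (\<lambda>j. mk (\<lambda>z. if z = a then (if j = d then 3 else if j \<in> S then 2 else 1)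
     else if z = b then (if j = d then 2 else if j \<in> S then 1 else 3)
     else if z = c then (if j = d then 1 else if j \<in> S then 3 else 2) else 0))"
  have v0: "valid p0" by (simp add: p0_def)
  have "\<forall>j\<in>S. strict (p0 j) a b" using b c by (auto simp: p0_def)
  then have ab: "F p0 a b \<and> \<not> F p0 b a" using S b v0 unfolding Dall_def D_def by metis
  show ?thesis
  proof (cases "F p0 a c \<and> \<not> F p0 c a")
    case True
    have "W {d} a c" unfolding W_def
    proof (intro allI impI)
      fix p assume p: "valid p" "\<forall>j\<in>{d}. strict (p j) a c" "\<forall>j. j \<notin> {d} \<longrightarrow> strict (p j) c a"
      have "\<forall>j. wpref (p j) a c = wpref (p0 j) a c \<and> wpref (p j) c a = wpref (p0 j) c a"
      proof
        fix j show "wpref (p j) a c = wpref (p0 j) a c \<and> wpref (p j) c a = wpref (p0 j) c a"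
        proof (cases "j = d")
          case True
          have "strict (p0 j) a c" using True b c by (auto simp: p0_def)
          then show ?thesis using strict_wpref[OF p(1) v0] p True by auto
        next
          case False
          have "strict (p0 j) c a" using False b c by (auto simp: p0_def)
          then show ?thesis using strict_wpref[OF p(1) v0] p False by auto
        qed
      qed
      then show "F p a c \<and> \<not> F p c a" using iiaD[OF p(1) v0] True by metis
    qed
    then show ?thesis using W_Dall c by auto
  next
    case False
    then have "F p0 c a" using compl[OF v0] by blast
    then have cb: "F p0 c b \<and> \<not> F p0 b c" using ab trans[OF v0] by blast
    have "W (S - {d}) c b" unfolding W_def
    proof (intro allI impI)
      fix p assume p: "valid p" "\<forall>j\<in>S - {d}. strict (p j) c b" "\<forall>j. j \<notin> S - {d} \<longrightarrow> strict (p j) b c"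
      have "\<forall>j. wpref (p j) c b = wpref (p0 j) c b \<and> wpref (p j) b c = wpref (p0 j) b c"
      proof
        fix j show "wpref (p j) c b = wpref (p0 j) c b \<and> wpref (p j) b c = wpref (p0 j) b c"
        proof (cases "j \<in> S - {d}")
          case True
          have "strict (p0 j) c b" using True b c by (auto simp: p0_def)
          then show ?thesis using strict_wpref[OF p(1) v0] p True by auto
        next
          case False
          have "strict (p0 j) b c" using False b c by (auto simp: p0_def)
          then show ?thesis using strict_wpref[OF p(1) v0] p False by auto
        qed
      qed
      then show "F p c b \<and> \<not> F p b c" using iiaD[OF p(1) v0] cb by metis
    qed
    then show ?thesis using W_Dall c by auto
  qed
qed

lemma Dall_nonempty: "Dall S \<Longrightarrow> S \<noteq> {}"
proof
  assume S: "Dall S" "S = {}"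
  obtain a :: 'a where True by blast
  obtain b where b: "b \<noteq> a" using third by blast
  define p :: "('n,'a) profile" where "p = (\<lambda>j. mk (\<lambda>z. if z = b then 1 else 0))"
  have v: "valid p" by (simp add: p_def)
  have "F p a b" using S b v unfolding Dall_def D_def by auto
  moreover have "\<not> F p a b" using unanD[OF v, of b a] b by (auto simp: p_def)
  ultimately show False by simp
qed

lemma Dall_UNIV: "Dall UNIV"
  unfolding Dall_def D_def using unanD by blast

lemma arrow_dict: "\<exists>d. Dall {d}"
proof -
  obtain S where S: "Dall S" and min: "\<forall>T. Dall T \<longrightarrow> card S \<le> card T"
    using ex_has_least_nat[of Dall UNIV card] Dall_UNIV by blast
  obtain d where d: "d \<in> S" using Dall_nonempty[OF S] by blast
  show ?thesis
  proof (cases "S = {d}")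
    case True then show ?thesis using S by blast
  next
    case False
    then have ps: "{d} \<subset> S" using d by auto
    have c1: "card {d} < card S" using psubset_card_mono[OF _ ps] by simp
    have c2: "card (S - {d}) < card S" using card_Diff1_less[of S d] d by simp
    from contraction[OF S d] show ?thesis using min c1 c2 by fastforce
  qed
qed

end

lemma Ind_Rep: "Rep_worder (Abs_worder (\<lambda>_ _. True)) = (\<lambda>_ _. True)"
  by (rule Abs_worder_inverse) (simp add: weak_order_def)

lemma strict_Ind[simp]: "\<not> strict Ind a b"
  by (simp add: Ind_def Ind_Rep)

lemma Ind_ne[simp]: "Ind \<noteq> Cyc" "Cyc \<noteq> Ind"
  by (auto simp: Ind_def)

lemma ple_Ind: "ple x Ind" by (simp add: ple_def)
lemma ple_refl: "ple x x" by (simp add: ple_def)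

lemma ple_antisym:
  assumes "ple x y" "ple y x" shows "x = y"
proof -
  have e: "\<And>a b. strict x a b = strict y a b" using assms by (auto simp: ple_def)
  show ?thesis
  proof (cases x)
    case Cyc
    then show ?thesis
    proof (cases y)
      case (WO s)
      obtain a :: 'a where True by blast
      then show ?thesis using e[of a a] Cyc WO by simp
    qed simp
  next
    case (WO r)
    show ?thesis
    proof (cases "y = Cyc")
      case Cyc: True
      obtain a :: 'a where True by blast
      then show ?thesis using e[of a a] Cyc WO by simp
    next
      case False
      then obtain s where WO': "y = WO s" by (cases y) auto
      have "Rep_worder r = Rep_worder s"
      proof (intro ext)
        fix a b
        have "Rep_worder r a b \<or> Rep_worder r b a" "Rep_worder s a b \<or> Rep_worder s b a"
          using Rep_wo[of r] Rep_wo[of s] by (auto simp: weak_order_def)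
        then show "Rep_worder r a b = Rep_worder s a b" using e[of b a] WO WO' by auto
      qed
      then show ?thesis using WO WO' by (simp add: Rep_worder_inject)
    qed
  qed
qed

lemma pmeet_Ind: "pmeet Ind x = x"
  unfolding pmeet_def
  by (rule the_equality) (auto simp: ple_Ind ple_refl intro: ple_antisym)

lemma pneg_Cyc: "pneg Cyc = Ind" by (simp add: pneg_def)
lemma pneg_Ind: "pneg Ind = Cyc" by (simp add: pneg_def)
lemma pneg_eq_Cyc: "pneg y = Cyc \<Longrightarrow> y = Ind"
  by (auto simp: pneg_def split: if_splits pref.splits)

theorem theorem11:
  fixes w :: "('n::finite, 'a::finite) profile \<Rightarrow> 'a pref" and i :: 'n
  assumes "card (UNIV :: 'a set) \<ge> 3"
    and "card (UNIV :: 'n set) \<ge> 2"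
    and "unanimity_iia w"
    and "non_dictatorship w"
  shows "quasi_goedelian w i (Upsilon i)"
proof -
  obtain F where F: "induced_by w F" "unanimity_rel F" "iia_rel F"
    using assms(3) unfolding unanimity_iia_def by blast
  have "\<exists>q. valid q \<and> w q = Cyc"
  proof (rule ccontr)
    assume nc: "\<not> ?thesis"
    have comp: "valid p \<Longrightarrow> F p a b \<or> F p b a" for p a b
      using F(1) unfolding induced_by_def by blast
    have tr: "valid p \<Longrightarrow> (\<forall>a b c. F p a b \<longrightarrow> F p b c \<longrightarrow> F p a c) \<and> w p = WO (Abs_worder (F p))" for p
      using F(1) nc unfolding induced_by_def by metis
    interpret arrow F
      by unfold_locales (use assms(1) comp tr F in blast)+
    obtain d where d: "Dall {d}" using arrow_dict by blast
    have "dictator w d" unfolding dictator_def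
    proof (intro allI impI conjI)
      fix p :: "('n,'a) profile" assume p: "valid p"
      show "w p = Cyc \<Longrightarrow> p d = Ind" using nc p by blast
      have wo: "weak_order (F p)" using comp[OF p] tr[OF p] by (auto simp: weak_order_def)
      have wp: "w p = WO (Abs_worder (F p))" using tr[OF p] by blast
      show "ple (w p) (p d)" unfolding ple_def
      proof (intro allI impI)
        fix a b assume s: "strict (p d) a b"
        then have "a \<noteq> b" using strict_irrefl[OF p] by blast
        then have "F p a b \<and> \<not> F p b a" using d s p unfolding Dall_def D_def by blast
        then show "strict (w p) a b" using wp Abs_worder_inverse[of "F p"] wo by simp
      qed
    qed
    then show False using assms(4) unfolding non_dictatorship_def by blast
  qed
  then obtain q where q: "valid q" "w q = Cyc" by blast
  define y where "y = w (prof_neg q)"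
  have s1: "star w i (Upsilon i) q = (\<lambda>j. Cyc)"
    by (auto simp: star_def Omega_def Upsilon_def q(2) pmeet_Ind)
  have s2: "star w i (Upsilon i) (prof_neg q) = (\<lambda>j. if j = i then y else Cyc)"
    by (auto simp: star_def Omega_def Upsilon_def y_def pmeet_Ind)
  have le: "prof_le q (prof_neg (star w i (Upsilon i) q))"
    by (simp add: s1 prof_le_def prof_neg_def pneg_Cyc ple_Ind)
  have "\<not> (quasi_consistent w i (Upsilon i) q \<and> quasi_complete w i (Upsilon i) q)"
  proof
    assume h: "quasi_consistent w i (Upsilon i) q \<and> quasi_complete w i (Upsilon i) q"
    from h have "\<exists>j. pmeet Ind (pneg (if j = i then y else Cyc)) = Cyc"
      unfolding quasi_complete_def inconsistent_def s1 s2 by (simp add: prof_neg_def pneg_Cyc)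
    then have "pneg y = Cyc" by (auto simp: pmeet_Ind pneg_Cyc split: if_splits)
    then have yI: "y = Ind" by (rule pneg_eq_Cyc)
    from h have "\<forall>j. ple (q j) (pneg (if j = i then y else Cyc))"
      unfolding quasi_consistent_def prof_le_def s2 unfolding prof_neg_def by simp
    then have "ple (q i) (pneg y)" by (drule_tac x=i in spec) simp
    then have "ple (q i) Cyc" using yI pneg_Ind by metis
    moreover obtain r where "q i = WO r" using valid_WO[OF q(1)] by blast
    moreover obtain a :: 'a where True by blast
    ultimately show False by (auto simp: ple_def)
  qed
  then show ?thesis using q(1) le unfolding quasi_goedelian_def by blast
qed

end
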